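(* If $(X,Q)$ is an $\varepsilon$-representative sequence for a $c$-expensive ($c>0$), oddly- or evenly-priced mechanism $M$ and a distribution $\mathcal{D}$, then for every index $i\ge1$, $\mathrm{gap}_i^{X,Q}\ge p^M(\vec x_i)/2$.
   Context: A mechanism $M$ is a set of options $(\vec q,p)$, $\vec q\in[0,1]^k$, $p\in\mathbb{R}$, containing $(\vec0,0)$; a buyer with values $\vec v\in\mathbb{R}^k_{\ge0}$ selects an option maximizing $\vec v\cdot\vec q-p$, with price $p^M(\vec v)$ and allocation $\vec q^M(\vec v)$. $M$ is $c$-expensive if every non-null option has price $\ge c$; oddly-priced (resp. evenly-priced) if every non-null option price lies in $[c2^i,c2^{i+1})$ for an odd (resp. even) integer $i$. $\varepsilon$-representative sequence: $\vec q_0=\vec0$; $a=1$ if oddly-priced, $a=0$ if evenly-priced; $B_j:=\{\vec v\in\mathrm{supp}(\mathcal{D}):p^M(\vec v)\in[c2^{2(j-1)+a},c2^{2(j-1)+a+1})\}$; for nonempty $B_j$ pick $\vec x_j\in B_j$ with $\|\vec x_j\|_1\le(1+\varepsilon)\|\vec v\|_1$ for all $\vec v\in B_j$ and $\vec q_j:=\vec q^M(\vec x_j)$; empty buckets omitted, indices shifted. $\mathrm{gap}_i^{X,Q}:=\min_{0\le j<i}(\vec q_i-\vec q_j)\cdot\vec x_i$. *)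

theory Defs
  imports "HOL-Analysis.Analysis"
begin

text \<open>An option is a pair (allocation vector, price). A mechanism is a set of options.\<close>
type_synonym 'k option_m = "(real ^ 'k) \<times> real"

definition is_mechanism :: "'k::finite option_m set \<Rightarrow> bool" where
  "is_mechanism M \<longleftrightarrow> (0, 0) \<in> M \<and>
     (\<forall>(q, p) \<in> M. \<forall>i. 0 \<le> q $ i \<and> q $ i \<le> 1)"

definition is_choice :: "'k::finite option_m set \<Rightarrow> (real ^ 'k) set \<Rightarrow> (real ^ 'k \<Rightarrow> 'k option_m) \<Rightarrow> bool" where
  "is_choice M S choice \<longleftrightarrow> (\<forall>v \<in> S. choice v \<in> M \<and>
     (\<forall>(q, p) \<in> M. v \<bullet> q - p \<le> v \<bullet> fst (choice v) - snd (choice v)))"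

definition c_expensive :: "real \<Rightarrow> 'k::finite option_m set \<Rightarrow> bool" where
  "c_expensive c M \<longleftrightarrow> (\<forall>(q, p) \<in> M. (q, p) \<noteq> (0, 0) \<longrightarrow> c \<le> p)"

definition oddly_priced :: "real \<Rightarrow> 'k::finite option_m set \<Rightarrow> bool" where
  "oddly_priced c M \<longleftrightarrow> (\<forall>(q, p) \<in> M. (q, p) \<noteq> (0, 0) \<longrightarrow>
     (\<exists>i::int. odd i \<and> c * 2 powr (of_int i) \<le> p \<and> p < c * 2 powr (of_int i + 1)))"

definition evenly_priced :: "real \<Rightarrow> 'k::finite option_m set \<Rightarrow> bool" where
  "evenly_priced c M \<longleftrightarrow> (\<forall>(q, p) \<in> M. (q, p) \<noteq> (0, 0) \<longrightarrow>
     (\<exists>i::int. even i \<and> c * 2 powr (of_int i) \<le> p \<and> p < c * 2 powr (of_int i + 1)))"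

definition norm1 :: "real ^ 'k::finite \<Rightarrow> real" where
  "norm1 v = (\<Sum>i\<in>UNIV. \<bar>v $ i\<bar>)"

definition bucket :: "(real ^ 'k::finite \<Rightarrow> 'k option_m) \<Rightarrow> (real ^ 'k) set \<Rightarrow> real \<Rightarrow> nat \<Rightarrow> nat \<Rightarrow> (real ^ 'k) set" where
  "bucket choice S c a j = {v \<in> S.
     c * 2 powr (real (2 * (j - 1) + a)) \<le> snd (choice v) \<and>
     snd (choice v) < c * 2 powr (real (2 * (j - 1) + a + 1))}"

definition nonempty_buckets :: "(real ^ 'k::finite \<Rightarrow> 'k option_m) \<Rightarrow> (real ^ 'k) set \<Rightarrow> real \<Rightarrow> nat \<Rightarrow> nat set" where
  "nonempty_buckets choice S c a = {j. 1 \<le> j \<and> bucket choice S c a j \<noteq> {}}"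

text \<open>Index set {1..n} of the representative sequence after omitting empty buckets
  (all positive integers if there are infinitely many nonempty buckets).\<close>
definition seq_indices :: "nat set \<Rightarrow> nat set" where
  "seq_indices J = (if finite J then {1..card J} else {1..})"

text \<open>(X, Q) is an eps-representative sequence; b i is the (original) bucket index of the
  i-th element, enumerating the nonempty buckets in increasing order.\<close>
definition eps_representative ::
  "real \<Rightarrow> (real ^ 'k::finite \<Rightarrow> 'k option_m) \<Rightarrow> (real ^ 'k) set \<Rightarrow> real \<Rightarrow> nat \<Rightarrow>
   (nat \<Rightarrow> real ^ 'k) \<Rightarrow> (nat \<Rightarrow> real ^ 'k) \<Rightarrow> bool" where
  "eps_representative eps choice S c a X Q \<longleftrightarrow>
     Q 0 = 0 \<and>
     (\<exists>b :: nat \<Rightarrow> nat.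
        strict_mono_on (seq_indices (nonempty_buckets choice S c a)) b \<and>
        b ` seq_indices (nonempty_buckets choice S c a) = nonempty_buckets choice S c a \<and>
        (\<forall>i \<in> seq_indices (nonempty_buckets choice S c a).
           X i \<in> bucket choice S c a (b i) \<and>
           (\<forall>v \<in> bucket choice S c a (b i). norm1 (X i) \<le> (1 + eps) * norm1 v) \<and>
           Q i = fst (choice (X i))))"

definition gap :: "(nat \<Rightarrow> real ^ 'k::finite) \<Rightarrow> (nat \<Rightarrow> real ^ 'k) \<Rightarrow> nat \<Rightarrow> real" where
  "gap X Q i = Min ((\<lambda>j. (Q i - Q j) \<bullet> X i) ` {0..<i})"

end

theory Submission
  imports Defs
begin

theorem claim4p8:
  fixes M :: "('k::finite) option_m set"
    and choice :: "real ^ 'k \<Rightarrow> 'k option_m"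
    and S :: "(real ^ 'k) set"
    and c eps :: real and a :: nat
    and X Q :: "nat \<Rightarrow> real ^ 'k"
  assumes "is_mechanism M"
    and "c > 0"
    and "eps > 0"
    and "c_expensive c M"
    and "(a = 1 \<and> oddly_priced c M) \<or> (a = 0 \<and> evenly_priced c M)"
    and "\<forall>v \<in> S. \<forall>i. 0 \<le> v $ i"
    and "is_choice M S choice"
    and "eps_representative eps choice S c a X Q"
    and "i \<in> seq_indices (nonempty_buckets choice S c a)"
  shows "gap X Q i \<ge> snd (choice (X i)) / 2"
proof -
  let ?I = "seq_indices (nonempty_buckets choice S c a)"
  let ?J = "nonempty_buckets choice S c a"
  from assms(8) obtain b where Q0: "Q 0 = 0" and sm: "strict_mono_on ?I b"
    and bim: "b ` ?I = ?J"
    and bx: "\<And>i. i \<in> ?I \<Longrightarrow> X i \<in> bucket choice S c a (b i) \<and> Q i = fst (choice (X i))"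
    unfolding eps_representative_def by blast
  have iI: "\<And>j. 1 \<le> j \<Longrightarrow> j \<le> i \<Longrightarrow> j \<in> ?I"
    using assms(9) unfolding seq_indices_def by (auto split: if_splits)
  have i1: "1 \<le> i" using assms(9) unfolding seq_indices_def by (auto split: if_splits)
  have b1: "\<And>j. j \<in> ?I \<Longrightarrow> 1 \<le> b j" using bim unfolding nonempty_buckets_def by blast
  define p where "p = (\<lambda>j. snd (choice (X j)))"
  have Xi: "X i \<in> S" and pi_lo: "c * 2 powr (real (2 * (b i - 1) + a)) \<le> p i"
    and Qi: "Q i = fst (choice (X i))"
    using bx[OF assms(9)] unfolding bucket_def p_def by auto
  have pos: "p i > 0"
    using pi_lo assms(2) by (smt (verit) powr_gt_zero mult_pos_pos)
  have ch: "\<And>q pp. (q, pp) \<in> M \<Longrightarrow> X i \<bullet> q - pp \<le> X i \<bullet> Q i - p i"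
    using assms(7) Xi Qi unfolding is_choice_def p_def by fastforce
  have bound: "p i / 2 \<le> (Q i - Q j) \<bullet> X i" if "j < i" for j
  proof (cases "j = 0")
    case True
    have "(0, 0) \<in> M" using assms(1) unfolding is_mechanism_def by auto
    from ch[OF this] show ?thesis using True Q0 pos by (simp add: inner_commute)
  next
    case False
    have jI: "j \<in> ?I" using False that iI by auto
    have bj: "b j < b i" using sm jI assms(9) that by (simp add: strict_mono_on_def)
    have bj1: "1 \<le> b j" using b1 jI by auto
    have Xj: "X j \<in> S" and pj_hi: "p j < c * 2 powr (real (2 * (b j - 1) + a + 1))"
      and Qj: "Q j = fst (choice (X j))"
      using bx[OF jI] unfolding bucket_def p_def by auto
    have inM: "(Q j, p j) \<in> M" using assms(7) Xj Qj unfolding is_choice_def p_def by auto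
    have e: "real (2 * (b j - 1) + a + 1) \<le> real (2 * (b i - 1) + a) - 1"
      using bj bj1 by simp
    have "c * 2 powr (real (2 * (b j - 1) + a + 1)) \<le> c * 2 powr (real (2 * (b i - 1) + a) - 1)"
      using e assms(2) by (intro mult_left_mono) auto
    also have "\<dots> = c * 2 powr (real (2 * (b i - 1) + a)) / 2"
      by (simp add: powr_diff)
    finally have "p j < p i / 2" using pj_hi pi_lo by linarith
    moreover have "(Q i - Q j) \<bullet> X i = X i \<bullet> Q i - X i \<bullet> Q j"
      by (simp add: inner_diff_left inner_diff_right inner_commute[of _ "X i"])
    ultimately show ?thesis using ch[OF inM] by linarith
  qed
  have "p i / 2 \<le> Min ((\<lambda>j. (Q i - Q j) \<bullet> X i) ` {0..<i})"
    using bound i1 by (subst Min_ge_iff) auto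
  thus ?thesis unfolding gap_def p_def .
qed

end
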